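(* Let $s\ge2$, $\alpha>0$, and for integers $k\ge2$ let $I_k=[k,k+\alpha\log k]$ and $F_k=\{sA\cap I_k=\emptyset\}$. If $2\le i<j$ and $I_i\cap I_j=\emptyset$, then $$\prod_{\omega\in\Omega_{I_i}\cup\Omega_{I_j}}P(E_\omega^c)\le P(F_i)P(F_j)\big(1+O(j^{-1/s}\log j)\big),$$ with implied constant depending only on $s$ and $\alpha$.
   Context: Let $A\subseteq\{1,2,\dots\}$ be a random set in which the events $\{n\in A\}$ are mutually independent with $P(n\in A)=\frac1s n^{-1+1/s}$, and $sA=\{a_1+\cdots+a_s:a_i\in A\}$. For a finite set $\omega$ of distinct positive integers, $E_\omega=\{\omega\subseteq A\}$ and $E_\omega^c=\{\omega\not\subseteq A\}$. For $\omega=\{x_1,\dots,x_r\}$ define $\sigma(\omega)=\{a_1x_1+\cdots+a_rx_r: a_1+\cdots+a_r=s,\ a_i\ge1 \text{ integers}\}$. For an interval $I$, $\Omega_I=\{\omega:\sigma(\omega)\cap I\neq\emptyset\}$. *)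

theory Defs
  imports "HOL-Probability.Probability"
begin

definition incl_prob :: "nat \<Rightarrow> nat \<Rightarrow> real" where
  "incl_prob s n = (if n = 0 then 0 else (1 / real s) * real n powr (-1 + 1 / real s))"

definition RS :: "nat \<Rightarrow> (nat \<Rightarrow> bool) measure" where
  "RS s = PiM UNIV (\<lambda>n. measure_pmf (bernoulli_pmf (incl_prob s n)))"

definition setA :: "(nat \<Rightarrow> bool) \<Rightarrow> nat set" where
  "setA x = {n. 1 \<le> n \<and> x n}"

definition sumset :: "nat \<Rightarrow> nat set \<Rightarrow> nat set" where
  "sumset s A = {(\<Sum>i<s. f i) | f. \<forall>i<s. f i \<in> A}"

definition sigma_set :: "nat \<Rightarrow> nat set \<Rightarrow> nat set" where
  "sigma_set s \<omega> = {(\<Sum>x\<in>\<omega>. a x * x) | a :: nat \<Rightarrow> nat.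
      (\<forall>x\<in>\<omega>. 1 \<le> a x) \<and> (\<Sum>x\<in>\<omega>. a x) = s}"

definition Omega :: "nat \<Rightarrow> real set \<Rightarrow> nat set set" where
  "Omega s I = {\<omega>. finite \<omega> \<and> (\<forall>x\<in>\<omega>. 1 \<le> x) \<and> real ` sigma_set s \<omega> \<inter> I \<noteq> {}}"

definition Ik :: "real \<Rightarrow> nat \<Rightarrow> real set" where
  "Ik \<alpha> k = {real k .. real k + \<alpha> * ln (real k)}"

definition Ec :: "nat \<Rightarrow> nat set \<Rightarrow> (nat \<Rightarrow> bool) set" where
  "Ec s \<omega> = {x \<in> space (RS s). \<not> \<omega> \<subseteq> setA x}"

definition Fk :: "nat \<Rightarrow> real \<Rightarrow> nat \<Rightarrow> (nat \<Rightarrow> bool) set" where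
  "Fk s \<alpha> k = {x \<in> space (RS s). real ` sumset s (setA x) \<inter> Ik \<alpha> k = {}}"

end

theory Submission
  imports Defs
begin


definition Wt :: "(nat\<Rightarrow>real) \<Rightarrow> nat set \<Rightarrow> (nat\<Rightarrow>bool) \<Rightarrow> real" where
  "Wt p J y = (\<Prod>n\<in>J. if y n then p n else 1 - p n)"
definition Exw :: "(nat\<Rightarrow>real) \<Rightarrow> nat set \<Rightarrow> ((nat\<Rightarrow>bool)\<Rightarrow>real) \<Rightarrow> real" where
  "Exw p J F = (\<Sum>y\<in>PiE J (\<lambda>_. UNIV). Wt p J y * F y)"

lemma Wt_nonneg: "(\<And>n. 0 \<le> p n \<and> p n \<le> 1) \<Longrightarrow> 0 \<le> Wt p J y"
  unfolding Wt_def by (intro prod_nonneg) auto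

lemma Ex_insert:
  assumes "finite J" "a \<notin> J"
  shows "Exw p (insert a J) F = (1 - p a) * Exw p J (\<lambda>y. F (y(a:=False))) + p a * Exw p J (\<lambda>y. F (y(a:=True)))"
proof -
  let ?h = "\<lambda>(b::bool, g::nat\<Rightarrow>bool). g(a := b)"
  have inj: "inj_on ?h (UNIV \<times> PiE J (\<lambda>_. UNIV))"
    using assms(2) by (auto simp: inj_on_def PiE_def extensional_def fun_eq_iff)
  have W: "Wt p (insert a J) (g(a:=b)) = (if b then p a else 1 - p a) * Wt p J g" for g b
  proof -
    have "(\<Prod>n\<in>J. if (g(a:=b)) n then p n else 1 - p n) = (\<Prod>n\<in>J. if g n then p n else 1 - p n)"
      using assms by (intro prod.cong) auto
    then show ?thesis unfolding Wt_def using assms by (simp add: prod.insert)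
  qed
  have "Exw p (insert a J) F = (\<Sum>z\<in>UNIV \<times> PiE J (\<lambda>_. UNIV). Wt p (insert a J) (?h z) * F (?h z))"
    unfolding Exw_def PiE_insert_eq by (subst sum.reindex[OF inj]) (simp add: comp_def)
  also have "\<dots> = (\<Sum>b\<in>UNIV. \<Sum>g\<in>PiE J (\<lambda>_. UNIV). Wt p (insert a J) (g(a:=b)) * F (g(a:=b)))"
    by (subst sum.cartesian_product) (simp add: case_prod_beta)
  also have "\<dots> = (1 - p a) * Exw p J (\<lambda>y. F (y(a:=False))) + p a * Exw p J (\<lambda>y. F (y(a:=True)))"
    unfolding Exw_def W UNIV_bool by (simp add: sum_distrib_left mult.assoc)
  finally show ?thesis .
qed

lemma Ex_mono:
  assumes "\<And>n. 0 \<le> p n \<and> p n \<le> 1" "\<And>y. F y \<le> G y"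
  shows "Exw p J F \<le> Exw p J G"
  unfolding Exw_def by (intro sum_mono mult_left_mono assms Wt_nonneg) 

definition antimono_fun :: "((nat\<Rightarrow>bool)\<Rightarrow>real) \<Rightarrow> bool" where
  "antimono_fun F \<longleftrightarrow> (\<forall>y z. y \<le> z \<longrightarrow> F z \<le> F y)"

lemma harris_Ex:
  assumes "finite J" "\<And>n. 0 \<le> p n \<and> p n \<le> 1"
  shows "antimono_fun F \<Longrightarrow> antimono_fun G \<Longrightarrow> Exw p J F * Exw p J G \<le> Exw p J (\<lambda>y. F y * G y)"
  using assms(1)
proof (induction J arbitrary: F G rule: finite_induct)
  case empty
  then show ?case by (simp add: Exw_def Wt_def)
next
  case (insert a J)
  define F0 where "F0 = (\<lambda>y. F (y(a:=False)))"
  define F1 where "F1 = (\<lambda>y. F (y(a:=True)))"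
  define G0 where "G0 = (\<lambda>y. G (y(a:=False)))"
  define G1 where "G1 = (\<lambda>y. G (y(a:=True)))"
  have up: "y(a:=False) \<le> y(a:=True)" for y :: "nat \<Rightarrow> bool" by (simp add: le_fun_def)
  have mono_upd: "y \<le> z \<Longrightarrow> y(a:=b) \<le> z(a:=b)" for y z :: "nat\<Rightarrow>bool" and b
    by (simp add: le_fun_def)
  have aF0: "antimono_fun F0" and aF1: "antimono_fun F1" and aG0: "antimono_fun G0" and aG1: "antimono_fun G1"
    unfolding antimono_fun_def F0_def F1_def G0_def G1_def
    using insert.prems mono_upd unfolding antimono_fun_def by (meson)+
  have F10: "Exw p J F1 \<le> Exw p J F0" using insert.prems(1) up
    unfolding antimono_fun_def F0_def F1_def by (intro Ex_mono assms(2)) blast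
  have G10: "Exw p J G1 \<le> Exw p J G0" using insert.prems(2) up
    unfolding antimono_fun_def G0_def G1_def by (intro Ex_mono assms(2)) blast
  have IH0: "Exw p J F0 * Exw p J G0 \<le> Exw p J (\<lambda>y. F0 y * G0 y)" using insert.IH aF0 aG0 by blast
  have IH1: "Exw p J F1 * Exw p J G1 \<le> Exw p J (\<lambda>y. F1 y * G1 y)" using insert.IH aF1 aG1 by blast
  have pa: "0 \<le> p a" "p a \<le> 1" using assms(2) by auto
  have key: "(1 - q) * (A0 * B0) + q * (A1 * B1) - ((1 - q) * A0 + q * A1) * ((1 - q) * B0 + q * B1)
     = q * (1 - q) * ((A0 - A1) * (B0 - B1))" for q A0 A1 B0 B1 :: real
    by (simp add: algebra_simps)
  have "((1 - p a) * Exw p J F0 + p a * Exw p J F1) * ((1 - p a) * Exw p J G0 + p a * Exw p J G1)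
      \<le> (1 - p a) * (Exw p J F0 * Exw p J G0) + p a * (Exw p J F1 * Exw p J G1)"
    using key[of "p a" "Exw p J F0" "Exw p J G0" "Exw p J F1" "Exw p J G1"] F10 G10 pa
    by (smt (verit, best) mult_nonneg_nonneg)
  also have "\<dots> \<le> (1 - p a) * Exw p J (\<lambda>y. F0 y * G0 y) + p a * Exw p J (\<lambda>y. F1 y * G1 y)"
    using IH0 IH1 pa by (intro add_mono mult_left_mono) auto
  finally show ?case using insert.hyps
    by (simp add: Ex_insert F0_def F1_def G0_def G1_def)
qed



lemma incl_prob_nonneg: "0 \<le> incl_prob s n"
  unfolding incl_prob_def by auto

lemma incl_prob_le_half:
  assumes "s \<ge> 2" shows "incl_prob s n \<le> 1/2"
proof (cases "n = 0")
  case False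
  have e: "-1 + 1 / real s \<le> 0" using assms by (simp add: field_simps)
  have "real n powr (-1 + 1 / real s) \<le> real 1 powr (-1 + 1 / real s)"
    using False by (intro powr_mono2'[OF e]) auto
  then have "real n powr (-1 + 1 / real s) \<le> 1" by simp
  moreover have "1 / real s \<le> 1/2" using assms by (simp add: field_simps)
  ultimately show ?thesis using False unfolding incl_prob_def
    by (smt (verit, ccfv_SIG) divide_nonneg_nonneg mult_left_le of_nat_0_le_iff powr_ge_zero mult_mono)
qed (simp add: incl_prob_def)

lemma incl_prob_01: "s \<ge> 2 \<Longrightarrow> 0 \<le> incl_prob s n \<and> incl_prob s n \<le> 1"
  using incl_prob_nonneg[of s n] incl_prob_le_half[of s n] by auto

lemma space_RS: "space (RS s) = UNIV"
  unfolding RS_def by (simp add: space_PiM)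

lemma link:
  assumes s: "s \<ge> 2" and J: "finite J"
  shows "measure (RS s) {x. restrict x J \<in> X} = Exw (incl_prob s) J (\<lambda>y. of_bool (y \<in> X))"
proof -
  define M where "M = (\<lambda>n. measure_pmf (bernoulli_pmf (incl_prob s n)))"
  interpret P: product_prob_space M UNIV
    unfolding M_def by (intro product_prob_spaceI) (simp add: measure_pmf.prob_space_axioms)
  have RS: "RS s = PiM UNIV M" unfolding RS_def M_def by simp
  define A where "A = (\<lambda>y. prod_emb UNIV M J (PiE J (\<lambda>n. {y n})))"
  have Aeq: "A y = {x. restrict x J = y}" if "y \<in> PiE J (\<lambda>_. UNIV)" for y
    using that unfolding A_def prod_emb_def M_def
    by (auto simp: space_PiM PiE_def extensional_def restrict_def fun_eq_iff)
  have U: "{x. restrict x J \<in> X} = (\<Union>y\<in>X \<inter> PiE J (\<lambda>_. UNIV). A y)"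
    using Aeq by (auto simp: PiE_def extensional_def)
  have fin: "finite (X \<inter> PiE J (\<lambda>_. UNIV))"
    using J by (intro finite_Int disjI2 finite_PiE) auto
  have "measure (RS s) {x. restrict x J \<in> X} = (\<Sum>y\<in>X \<inter> PiE J (\<lambda>_. UNIV). measure (PiM UNIV M) (A y))"
    unfolding U RS
  proof (rule measure_finite_Union[OF fin])
    show "A ` (X \<inter> PiE J (\<lambda>_. UNIV)) \<subseteq> sets (PiM UNIV M)"
      unfolding A_def using J by (auto intro!: sets_PiM_I simp: M_def)
    show "disjoint_family_on A (X \<inter> PiE J (\<lambda>_. UNIV))"
      unfolding disjoint_family_on_def using Aeq by auto
    show "emeasure (PiM UNIV M) (A y) \<noteq> \<infinity>" for y
      by (simp add: P.emeasure_eq_measure)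
  qed
  also have "\<dots> = (\<Sum>y\<in>X \<inter> PiE J (\<lambda>_. UNIV). Wt (incl_prob s) J y)"
  proof (intro sum.cong refl)
    fix y assume "y \<in> X \<inter> PiE J (\<lambda>_. UNIV)"
    have "measure (PiM UNIV M) (A y) = (\<Prod>n\<in>J. measure (M n) {y n})"
      unfolding A_def using J by (intro P.measure_PiM_emb) (auto simp: M_def)
    also have "\<dots> = Wt (incl_prob s) J y"
      unfolding Wt_def M_def using incl_prob_01[OF s]
      by (intro prod.cong refl) (simp add: measure_pmf_single)
    finally show "measure (PiM UNIV M) (A y) = Wt (incl_prob s) J y" .
  qed
  also have "\<dots> = Exw (incl_prob s) J (\<lambda>y. of_bool (y \<in> X))"
    unfolding Exw_def using J by (simp add: sum.inter_restrict[symmetric] Int_commute finite_PiE) 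
  finally show ?thesis .
qed



lemma Exw_nonneg: "(\<And>n. 0 \<le> p n \<and> p n \<le> 1) \<Longrightarrow> (\<And>y. 0 \<le> F y) \<Longrightarrow> 0 \<le> Exw p J F"
  unfolding Exw_def by (intro sum_nonneg mult_nonneg_nonneg Wt_nonneg) auto

lemma Exw_one: "finite J \<Longrightarrow> Exw p J (\<lambda>_. 1) = 1"
proof -
  assume J: "finite J"
  have "Exw p J (\<lambda>_. 1) = (\<Sum>g\<in>PiE J (\<lambda>_. UNIV). \<Prod>n\<in>J. (\<lambda>n b. if b then p n else 1 - p n) n (g n))"
    unfolding Exw_def Wt_def by simp
  also have "\<dots> = (\<Prod>n\<in>J. \<Sum>b\<in>UNIV. if b then p n else 1 - p n)"
    using J by (intro prod_sum_PiE[symmetric]) auto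
  also have "\<dots> = 1" by (simp add: UNIV_bool)
  finally show ?thesis .
qed

lemma Exw_all: "finite J \<Longrightarrow> Exw p J (\<lambda>y. of_bool (\<forall>n\<in>J. y n)) = (\<Prod>n\<in>J. p n)"
proof -
  assume J: "finite J"
  have "Exw p J (\<lambda>y. of_bool (\<forall>n\<in>J. y n)) = (\<Sum>g\<in>PiE J (\<lambda>_. UNIV). \<Prod>n\<in>J. (\<lambda>n b. if b then p n else 0) n (g n))"
    unfolding Exw_def Wt_def
  proof (intro sum.cong refl)
    fix g :: "nat \<Rightarrow> bool" assume "g \<in> PiE J (\<lambda>_. UNIV)"
    show "(\<Prod>n\<in>J. if g n then p n else 1 - p n) * of_bool (\<forall>n\<in>J. g n) = (\<Prod>n\<in>J. (\<lambda>n b. if b then p n else 0) n (g n))"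
    proof (cases "\<forall>n\<in>J. g n")
      case True then show ?thesis by (simp cong: prod.cong)
    next
      case False
      then obtain n where "n \<in> J" "\<not> g n" by auto
      then have "(\<Prod>n\<in>J. (\<lambda>n b. if b then p n else 0) n (g n)) = 0"
        using J by (intro prod_zero) auto
      then show ?thesis using False by simp
    qed
  qed
  also have "\<dots> = (\<Prod>n\<in>J. \<Sum>b\<in>UNIV. if b then p n else 0)"
    using J by (intro prod_sum_PiE[symmetric]) auto
  also have "\<dots> = (\<Prod>n\<in>J. p n)" by (simp add: UNIV_bool)
  finally show ?thesis .
qed

lemma Exw_diff: "Exw p J (\<lambda>y. F y - G y) = Exw p J F - Exw p J G"
  unfolding Exw_def by (simp add: sum_subtractf right_diff_distrib)

lemma harris_family:
  assumes J: "finite J" and p: "\<And>n. 0 \<le> p n \<and> p n \<le> 1" and W: "finite W"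
  shows "(\<Prod>\<omega>\<in>W. Exw p J (\<lambda>y. of_bool (\<not> (\<forall>n\<in>\<omega>. y n))))
           \<le> Exw p J (\<lambda>y. of_bool (\<forall>\<omega>\<in>W. \<not> (\<forall>n\<in>\<omega>. y n)))"
  using W
proof (induction W rule: finite_induct)
  case empty
  then show ?case using Exw_one[OF J] by simp
next
  case (insert \<omega> W)
  let ?F = "\<lambda>y. of_bool (\<not> (\<forall>n\<in>\<omega>. y n)) :: real"
  let ?G = "\<lambda>y. of_bool (\<forall>\<omega>\<in>W. \<not> (\<forall>n\<in>\<omega>. y n)) :: real"
  have aF: "antimono_fun ?F" unfolding antimono_fun_def le_fun_def by auto
  have aG: "antimono_fun ?G" unfolding antimono_fun_def le_fun_def le_bool_def by (auto; blast)
  have "(\<Prod>\<omega>\<in>insert \<omega> W. Exw p J (\<lambda>y. of_bool (\<not> (\<forall>n\<in>\<omega>. y n))))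
        = Exw p J ?F * (\<Prod>\<omega>\<in>W. Exw p J (\<lambda>y. of_bool (\<not> (\<forall>n\<in>\<omega>. y n))))"
    using insert.hyps by simp
  also have "\<dots> \<le> Exw p J ?F * Exw p J ?G"
    by (intro mult_left_mono insert.IH Exw_nonneg p) auto
  also have "\<dots> \<le> Exw p J (\<lambda>y. ?F y * ?G y)"
    by (intro harris_Ex J p aF aG)
  also have "(\<lambda>y. ?F y * ?G y) = (\<lambda>y. of_bool (\<forall>\<omega>\<in>insert \<omega> W. \<not> (\<forall>n\<in>\<omega>. y n)))"
    by auto
  finally show ?case .
qed

lemma setA_sub: "(\<forall>n\<in>\<omega>. 1 \<le> n) \<Longrightarrow> \<omega> \<subseteq> setA x \<longleftrightarrow> (\<forall>n\<in>\<omega>. x n)"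
  unfolding setA_def by auto

lemma prob_Ec:
  assumes s: "s \<ge> 2" and fin: "finite \<omega>" and pos: "\<forall>n\<in>\<omega>. 1 \<le> n"
  shows "measure (RS s) (Ec s \<omega>) = 1 - (\<Prod>n\<in>\<omega>. incl_prob s n)"
proof -
  have "Ec s \<omega> = {x. restrict x \<omega> \<in> {y. \<not> (\<forall>n\<in>\<omega>. y n)}}"
    unfolding Ec_def space_RS using setA_sub[OF pos] by auto
  then have "measure (RS s) (Ec s \<omega>) = Exw (incl_prob s) \<omega> (\<lambda>y. of_bool (y \<in> {y. \<not> (\<forall>n\<in>\<omega>. y n)}))"
    using link[OF s fin, of "{y. \<not> (\<forall>n\<in>\<omega>. y n)}"] by (simp only:)
  also have "\<dots> = Exw (incl_prob s) \<omega> (\<lambda>y. 1 - of_bool (\<forall>n\<in>\<omega>. y n))"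
    by (rule arg_cong[where f="Exw (incl_prob s) \<omega>"]) auto
  also have "\<dots> = 1 - (\<Prod>n\<in>\<omega>. incl_prob s n)"
    by (subst Exw_diff) (simp add: Exw_one Exw_all fin)
  finally show ?thesis .
qed

lemma harris_RS:
  assumes s: "s \<ge> 2" and W: "finite W" and Wp: "\<forall>\<omega>\<in>W. finite \<omega> \<and> (\<forall>n\<in>\<omega>. 1 \<le> n)"
  shows "(\<Prod>\<omega>\<in>W. measure (RS s) (Ec s \<omega>)) \<le> measure (RS s) {x. \<forall>\<omega>\<in>W. \<not> \<omega> \<subseteq> setA x}"
proof -
  define J where "J = \<Union>W"
  have J: "finite J" unfolding J_def using W Wp by auto
  have e1: "measure (RS s) (Ec s \<omega>) = Exw (incl_prob s) J (\<lambda>y. of_bool (\<not> (\<forall>n\<in>\<omega>. y n)))"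
    if "\<omega> \<in> W" for \<omega>
  proof -
    have "Ec s \<omega> = {x. restrict x J \<in> {y. \<not> (\<forall>n\<in>\<omega>. y n)}}"
      unfolding Ec_def space_RS using setA_sub[of \<omega>] Wp that unfolding J_def by auto
    then show ?thesis using link[OF s J, of "{y. \<not> (\<forall>n\<in>\<omega>. y n)}"] by (simp only: mem_Collect_eq)
  qed
  have e2: "{x. \<forall>\<omega>\<in>W. \<not> \<omega> \<subseteq> setA x} = {x. restrict x J \<in> {y. \<forall>\<omega>\<in>W. \<not> (\<forall>n\<in>\<omega>. y n)}}"
  proof (intro Collect_cong, unfold mem_Collect_eq, intro ball_cong refl arg_cong[where f=Not])
    fix x \<omega> assume "\<omega> \<in> W"
    then have "\<omega> \<subseteq> J" "\<forall>n\<in>\<omega>. 1 \<le> n" using Wp unfolding J_def by auto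
    then show "\<omega> \<subseteq> setA x \<longleftrightarrow> (\<forall>n\<in>\<omega>. restrict x J n)" using setA_sub by auto
  qed
  show ?thesis
    unfolding e2 link[OF s J] using e1 harris_family[OF J incl_prob_01[OF s] W]
    by (simp cong: prod.cong)
qed



lemma sum_fibers:
  fixes f :: "nat \<Rightarrow> nat"
  assumes "finite S"
  shows "(\<Sum>i\<in>S. f i) = (\<Sum>y\<in>f`S. card {i\<in>S. f i = y} * y)"
    and "card S = (\<Sum>y\<in>f`S. card {i\<in>S. f i = y})"
proof -
  show "(\<Sum>i\<in>S. f i) = (\<Sum>y\<in>f`S. card {i\<in>S. f i = y} * y)"
    using sum.image_gen[OF assms, of f f]
    by (simp add: sum.cong[OF refl, of _ "\<lambda>y. sum f {i\<in>S. f i = y}" "\<lambda>y. card {i\<in>S. f i = y} * y"])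
  show "card S = (\<Sum>y\<in>f`S. card {i\<in>S. f i = y})"
    using sum.image_gen[OF assms, of "\<lambda>_. 1::nat" f] by simp
qed

lemma sigma_to_fun:
  fixes a :: "nat \<Rightarrow> nat"
  assumes "finite \<omega>" "(\<Sum>y\<in>\<omega>. a y) = s"
  shows "\<exists>f. (\<forall>i<s. f i \<in> \<omega>) \<and> (\<Sum>i<s. f i) = (\<Sum>y\<in>\<omega>. a y * y)"
proof -
  define Sg where "Sg = Sigma \<omega> (\<lambda>y. {..<a y})"
  have fin: "finite Sg" unfolding Sg_def using assms by auto
  have "card Sg = s" unfolding Sg_def using assms by simp
  then obtain h where h: "bij_betw h {..<s} Sg"
    using finite_same_card_bij[of "{..<s}" Sg] fin by auto
  define f where "f = (\<lambda>i. fst (h i))"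
  have "\<forall>i<s. f i \<in> \<omega>"
  proof (intro allI impI)
    fix i assume "i < s"
    then have "h i \<in> Sg" using h unfolding bij_betw_def by auto
    then show "f i \<in> \<omega>" unfolding f_def Sg_def by auto
  qed
  moreover have "(\<Sum>i<s. f i) = (\<Sum>z\<in>Sg. fst z)"
    unfolding f_def using sum.reindex_bij_betw[OF h, of fst] by simp
  moreover have "(\<Sum>z\<in>Sg. fst z) = (\<Sum>y\<in>\<omega>. a y * y)"
  proof -
    have "(\<Sum>z\<in>Sg. fst z) = (\<Sum>y\<in>\<omega>. \<Sum>t\<in>{..<a y}. fst (y, t))"
      unfolding Sg_def using assms(1) by (subst sum.Sigma) (auto simp: case_prod_beta)
    then show ?thesis by simp
  qed
  ultimately show ?thesis by auto
qed

lemma Fk_eq: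
  assumes s: "s \<ge> 1"
  shows "Fk s \<alpha> k = {x. \<forall>\<omega>\<in>Omega s (Ik \<alpha> k). \<not> \<omega> \<subseteq> setA x}"
proof -
  have "(\<exists>m\<in>sumset s (setA x). real m \<in> Ik \<alpha> k) \<longleftrightarrow> (\<exists>\<omega>\<in>Omega s (Ik \<alpha> k). \<omega> \<subseteq> setA x)" for x
  proof
    assume "\<exists>m\<in>sumset s (setA x). real m \<in> Ik \<alpha> k"
    then obtain f where f: "\<forall>i<s. f i \<in> setA x" and m: "real (\<Sum>i<s. f i) \<in> Ik \<alpha> k"
      unfolding sumset_def by auto
    define \<omega> where "\<omega> = f ` {..<s}"
    define a where "a = (\<lambda>y. card {i\<in>{..<s}. f i = y})"
    have "(\<Sum>y\<in>\<omega>. a y * y) \<in> sigma_set s \<omega>"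
      unfolding sigma_set_def
    proof (intro CollectI exI conjI)
      show "\<forall>y\<in>\<omega>. 1 \<le> a y" unfolding \<omega>_def a_def
        by (auto simp: Suc_le_eq card_gt_0_iff)
      show "(\<Sum>y\<in>\<omega>. a y) = s" unfolding \<omega>_def a_def using sum_fibers(2)[of "{..<s}" f] by simp
    qed (rule refl)
    moreover have "(\<Sum>y\<in>\<omega>. a y * y) = (\<Sum>i<s. f i)"
      unfolding \<omega>_def a_def using sum_fibers(1)[of "{..<s}" f] by simp
    ultimately have "\<omega> \<in> Omega s (Ik \<alpha> k)" unfolding Omega_def
      using m f unfolding \<omega>_def setA_def by force
    moreover have "\<omega> \<subseteq> setA x" using f unfolding \<omega>_def by auto
    ultimately show "\<exists>\<omega>\<in>Omega s (Ik \<alpha> k). \<omega> \<subseteq> setA x" by blast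
  next
    assume "\<exists>\<omega>\<in>Omega s (Ik \<alpha> k). \<omega> \<subseteq> setA x"
    then obtain \<omega> where om: "\<omega> \<in> Omega s (Ik \<alpha> k)" and sub: "\<omega> \<subseteq> setA x" by blast
    then have fin: "finite \<omega>" and "\<exists>m\<in>sigma_set s \<omega>. real m \<in> Ik \<alpha> k"
      unfolding Omega_def by auto
    then obtain m0 where m0: "m0 \<in> sigma_set s \<omega>" "real m0 \<in> Ik \<alpha> k" by blast
    then obtain a where a: "(\<Sum>y\<in>\<omega>. a y) = s" and m0e: "m0 = (\<Sum>y\<in>\<omega>. a y * y)"
      unfolding sigma_set_def by blast
    have m: "real (\<Sum>y\<in>\<omega>. a y * y) \<in> Ik \<alpha> k" using m0 m0e by simp
    obtain f where f: "\<forall>i<s. f i \<in> \<omega>" and fs: "(\<Sum>i<s. f i) = (\<Sum>y\<in>\<omega>. a y * y)"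
      using sigma_to_fun[OF fin a] by blast
    have "(\<Sum>i<s. f i) \<in> sumset s (setA x)" unfolding sumset_def using f sub by blast
    then show "\<exists>m\<in>sumset s (setA x). real m \<in> Ik \<alpha> k" using fs m by (intro bexI[of _ "\<Sum>i<s. f i"]) auto
  qed
  then show ?thesis unfolding Fk_def space_RS by auto
qed



lemma powr_step:
  fixes \<theta> :: real and N :: nat
  assumes th: "0 < \<theta>" "\<theta> \<le> 1"
  shows "real N powr \<theta> / \<theta> + real (Suc N) powr (\<theta> - 1) \<le> real (Suc N) powr \<theta> / \<theta>"
proof (cases "N = 0")
  case True
  have "1 \<le> 1 / \<theta>" using th by (simp add: field_simps)
  then show ?thesis using True by simp
next
  case False
  have der: "\<And>x. real N \<le> x \<Longrightarrow> x \<le> real N + 1 \<Longrightarrow> ((\<lambda>z. z powr \<theta>) has_real_derivative \<theta> * x powr (\<theta> - 1)) (at x)"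
    using False by (intro has_real_derivative_powr) auto
  obtain z where z: "real N < z" "z < real N + 1"
    and eq: "(real N + 1) powr \<theta> - real N powr \<theta> = (real N + 1 - real N) * (\<theta> * z powr (\<theta> - 1))"
    using MVT2[of "real N" "real N + 1" "\<lambda>z. z powr \<theta>" "\<lambda>x. \<theta> * x powr (\<theta> - 1)", OF _ der] by auto
  have "(real N + 1) powr (\<theta> - 1) \<le> z powr (\<theta> - 1)"
    using z th by (intro powr_mono2') auto
  then have "\<theta> * (real N + 1) powr (\<theta> - 1) \<le> \<theta> * z powr (\<theta> - 1)"
    using th by (intro mult_left_mono) auto
  then have h: "real N powr \<theta> + \<theta> * (real N + 1) powr (\<theta> - 1) \<le> (real N + 1) powr \<theta>"
    using eq by simp
  have "(real N powr \<theta> + \<theta> * (real N + 1) powr (\<theta> - 1)) / \<theta> \<le> (real N + 1) powr \<theta> / \<theta>"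
    using h th by (intro divide_right_mono) auto
  moreover have "(real N powr \<theta> + \<theta> * (real N + 1) powr (\<theta> - 1)) / \<theta> = real N powr \<theta> / \<theta> + (real N + 1) powr (\<theta> - 1)"
    using th by (simp add: add_divide_distrib)
  ultimately show ?thesis by (simp add: add.commute)
qed

lemma powr_sum_bound:
  fixes \<theta> :: real
  assumes th: "0 < \<theta>" "\<theta> \<le> 1"
  shows "(\<Sum>n\<in>{1..N}. real n powr (\<theta> - 1)) \<le> real N powr \<theta> / \<theta>"
proof (induction N)
  case 0
  then show ?case by simp
next
  case (Suc N)
  have "(\<Sum>n\<in>{1..Suc N}. real n powr (\<theta> - 1)) = (\<Sum>n\<in>{1..N}. real n powr (\<theta> - 1)) + real (Suc N) powr (\<theta> - 1)"
    by simp
  also have "\<dots> \<le> real N powr \<theta> / \<theta> + real (Suc N) powr (\<theta> - 1)" using Suc by simp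
  also have "\<dots> \<le> real (Suc N) powr \<theta> / \<theta>" by (rule powr_step[OF th])
  finally show ?case .
qed

lemma incl_sum_bound:
  assumes s: "s \<ge> 2"
  shows "(\<Sum>n\<in>{1..N}. incl_prob s n) \<le> real N powr (1 / real s)"
proof -
  have "(\<Sum>n\<in>{1..N}. incl_prob s n) = (1 / real s) * (\<Sum>n\<in>{1..N}. real n powr (1 / real s - 1))"
    unfolding incl_prob_def by (simp add: sum_distrib_left)
  also have "\<dots> \<le> (1 / real s) * (real N powr (1 / real s) / (1 / real s))"
    using s by (intro mult_left_mono powr_sum_bound) auto
  also have "\<dots> = real N powr (1 / real s)" using s by simp
  finally show ?thesis .
qed

lemma set_sum_bound:
  fixes p :: "nat \<Rightarrow> real"
  assumes X: "finite X" and p: "\<And>n. 0 \<le> p n"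
  shows "(\<Sum>w\<in>{w. w \<subseteq> X \<and> card w = k}. \<Prod>n\<in>w. p n) \<le> (\<Sum>n\<in>X. p n) ^ k"
proof -
  define G where "G = {g\<in>PiE {..<k} (\<lambda>_. X). inj_on g {..<k}}"
  have finG: "finite G" unfolding G_def using X by (intro finite_subset[OF _ finite_PiE[of "{..<k}" "\<lambda>_. X"]]) auto
  have sub: "{w. w \<subseteq> X \<and> card w = k} \<subseteq> (\<lambda>g. g ` {..<k}) ` G"
  proof
    fix w assume w: "w \<in> {w. w \<subseteq> X \<and> card w = k}"
    then have fw: "finite w" using X finite_subset by auto
    obtain h where h: "bij_betw h {0..<card w} w" using ex_bij_betw_nat_finite[OF fw] by blast
    have h': "bij_betw h {..<k} w" using h w by (simp add: atLeast0LessThan)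
    have "restrict h {..<k} \<in> G" unfolding G_def using h' w
      by (auto simp: bij_betw_def inj_on_def)
    moreover have "w = restrict h {..<k} ` {..<k}" using h' by (auto simp: bij_betw_def)
    ultimately show "w \<in> (\<lambda>g. g ` {..<k}) ` G" by blast
  qed
  have "(\<Sum>w\<in>{w. w \<subseteq> X \<and> card w = k}. \<Prod>n\<in>w. p n) \<le> (\<Sum>w\<in>(\<lambda>g. g ` {..<k}) ` G. \<Prod>n\<in>w. p n)"
    by (intro sum_mono2 finite_imageI finG sub prod_nonneg p)
  also have "\<dots> \<le> (\<Sum>g\<in>G. \<Prod>n\<in>g ` {..<k}. p n)"
    using sum_image_le[OF finG, of "\<lambda>w. \<Prod>n\<in>w. p n" "\<lambda>g. g ` {..<k}"] p
    by (simp add: prod_nonneg comp_def)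
  also have "\<dots> = (\<Sum>g\<in>G. \<Prod>i<k. p (g i))"
    by (intro sum.cong refl) (simp add: G_def prod.reindex)
  also have "\<dots> \<le> (\<Sum>g\<in>PiE {..<k} (\<lambda>_. X). \<Prod>i<k. p (g i))"
    using X by (intro sum_mono2 finite_PiE) (auto simp: G_def intro: prod_nonneg p)
  also have "\<dots> = (\<Prod>i<k. \<Sum>n\<in>X. p n)"
    using X by (subst prod_sum_PiE[symmetric]) auto
  also have "\<dots> = (\<Sum>n\<in>X. p n) ^ k" by simp
  finally show ?thesis .
qed

lemma count_bound:
  fixes t c j :: nat and L :: real
  assumes "t \<ge> 1" "L \<ge> 0"
  shows "card {m::nat. real (t * m + c) \<in> {real j .. real j + L}} \<le> nat \<lfloor>L\<rfloor> + 1"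
proof -
  let ?A = "{m::nat. real (t * m + c) \<in> {real j .. real j + L}}"
  have "(\<lambda>m. t * m + c) ` ?A \<subseteq> {j .. j + nat \<lfloor>L\<rfloor>}"
  proof
    fix n assume "n \<in> (\<lambda>m. t * m + c) ` ?A"
    then obtain m where "n = t * m + c" "m \<in> ?A" by blast
    then have n: "real j \<le> real n" "real n \<le> real j + L" by auto
    then have jn: "j \<le> n" by linarith
    from n have "real n - real j \<le> L" by simp
    then have "int n - int j \<le> \<lfloor>L\<rfloor>" by (metis floor_mono floor_of_int of_int_diff of_int_of_nat_eq)
    then show "n \<in> {j .. j + nat \<lfloor>L\<rfloor>}" using jn assms(2) by auto
  qed
  moreover have "inj_on (\<lambda>m. t * m + c) ?A" using assms(1) by (auto simp: inj_on_def)
  ultimately have "card ?A \<le> card {j .. j + nat \<lfloor>L\<rfloor>}"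
    by (metis card_image card_mono finite_atLeastAtMost)
  then show ?thesis by simp
qed



lemma Omega_elem:
  assumes "\<omega> \<in> Omega s I"
  obtains a where "finite \<omega>" "\<forall>x\<in>\<omega>. 1 \<le> x" "\<forall>x\<in>\<omega>. 1 \<le> a x" "(\<Sum>x\<in>\<omega>. a x) = s"
    "real (\<Sum>x\<in>\<omega>. a x * x) \<in> I"
proof -
  from assms have fin: "finite \<omega>" and pos: "\<forall>x\<in>\<omega>. 1 \<le> x" and "\<exists>m\<in>sigma_set s \<omega>. real m \<in> I"
    unfolding Omega_def by auto
  then obtain m0 where m0: "m0 \<in> sigma_set s \<omega>" "real m0 \<in> I" by blast
  then obtain a where "\<forall>x\<in>\<omega>. 1 \<le> a x" "(\<Sum>x\<in>\<omega>. a x) = s" "m0 = (\<Sum>x\<in>\<omega>. a x * x)"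
    unfolding sigma_set_def by blast
  then show ?thesis using that fin pos m0 by simp
qed

lemma Omega_bound:
  assumes "\<omega> \<in> Omega s (Ik \<alpha> k)" "x \<in> \<omega>"
  shows "real x \<le> real k + \<alpha> * ln (real k)" "1 \<le> x"
proof -
  obtain a where fin: "finite \<omega>" "\<forall>x\<in>\<omega>. 1 \<le> x" "\<forall>x\<in>\<omega>. 1 \<le> a x" "(\<Sum>x\<in>\<omega>. a x) = s"
    "real (\<Sum>x\<in>\<omega>. a x * x) \<in> Ik \<alpha> k" using Omega_elem[OF assms(1)] by blast
  have "x \<le> a x * x" using fin assms(2) by simp
  also have "\<dots> \<le> (\<Sum>x\<in>\<omega>. a x * x)" using fin assms(2) by (intro member_le_sum) auto
  finally have "real x \<le> real (\<Sum>x\<in>\<omega>. a x * x)" by (simp only: of_nat_le_iff)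
  then show "real x \<le> real k + \<alpha> * ln (real k)" using fin(5) unfolding Ik_def by simp
  show "1 \<le> x" using fin assms by auto
qed

lemma Omega_finite: "finite (Omega s (Ik \<alpha> k))"
proof -
  have "Omega s (Ik \<alpha> k) \<subseteq> Pow {1..nat \<lfloor>real k + \<alpha> * ln (real k)\<rfloor>}"
  proof (intro subsetI PowI)
    fix \<omega> x assume o: "\<omega> \<in> Omega s (Ik \<alpha> k)" and x: "x \<in> \<omega>"
    have "x \<le> nat \<lfloor>real k + \<alpha> * ln (real k)\<rfloor>" by (rule le_nat_floor, rule Omega_bound[OF o x])
    then show "x \<in> {1..nat \<lfloor>real k + \<alpha> * ln (real k)\<rfloor>}"
      unfolding atLeastAtMost_iff using Omega_bound(2)[OF o x] by blast
  qed
  then show ?thesis by (rule finite_subset) auto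
qed

lemma Omega_card_lt:
  assumes "\<omega> \<in> Omega s (Ik \<alpha> i)" "\<omega> \<in> Omega s (Ik \<alpha> j)" "Ik \<alpha> i \<inter> Ik \<alpha> j = {}"
  shows "card \<omega> < s"
proof -
  obtain a where a: "finite \<omega>" "\<forall>x\<in>\<omega>. 1 \<le> a x" "(\<Sum>x\<in>\<omega>. a x) = s"
    "real (\<Sum>x\<in>\<omega>. a x * x) \<in> Ik \<alpha> i" using Omega_elem[OF assms(1)] by blast
  obtain b where b: "\<forall>x\<in>\<omega>. 1 \<le> b x" "(\<Sum>x\<in>\<omega>. b x) = s"
    "real (\<Sum>x\<in>\<omega>. b x * x) \<in> Ik \<alpha> j" using Omega_elem[OF assms(2)] by blast
  have "card \<omega> = (\<Sum>x\<in>\<omega>. 1)" by simp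
  also have "\<dots> \<le> (\<Sum>x\<in>\<omega>. a x)" using a by (intro sum_mono) auto
  finally have le: "card \<omega> \<le> s" using a by simp
  show ?thesis
  proof (rule ccontr)
    assume "\<not> card \<omega> < s"
    then have cs: "card \<omega> = s" using le by simp
    have one: "\<forall>x\<in>\<omega>. c x = 1" if c: "\<forall>x\<in>\<omega>. 1 \<le> c x" "(\<Sum>x\<in>\<omega>. c x) = s" for c :: "nat \<Rightarrow> nat"
    proof -
      have "(\<Sum>x\<in>\<omega>. c x) = (\<Sum>x\<in>\<omega>. (c x - 1) + 1)"
        using c by (intro sum.cong) auto
      also have "\<dots> = (\<Sum>x\<in>\<omega>. c x - 1) + card \<omega>" by (simp only: sum.distrib card_eq_sum)
      finally have "(\<Sum>x\<in>\<omega>. c x - 1) = 0" using c cs by simp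
      then show ?thesis using a(1) c by (auto intro: le_antisym)
    qed
    have "(\<Sum>x\<in>\<omega>. a x * x) = (\<Sum>x\<in>\<omega>. x)" using one[OF a(2,3)] by simp
    moreover have "(\<Sum>x\<in>\<omega>. b x * x) = (\<Sum>x\<in>\<omega>. x)" using one[OF b(1,2)] by simp
    ultimately show False using a(4) b(3) assms(3) by auto
  qed
qed



lemma count_finite:
  fixes t c j :: nat and L :: real
  assumes "t \<ge> 1"
  shows "finite {m::nat. real (t * m + c) \<in> {real j .. real j + L}}"
proof (rule finite_subset)
  show "{m::nat. real (t * m + c) \<in> {real j .. real j + L}} \<subseteq> {..nat \<lfloor>real j + L\<rfloor>}"
  proof
    fix m assume "m \<in> {m::nat. real (t * m + c) \<in> {real j .. real j + L}}"
    then have h: "real (t * m + c) \<le> real j + L" by simp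
    have "m \<le> t * m + c" using assms by (metis le_add1 le_trans mult_1 mult_le_mono1)
    also have "\<dots> \<le> nat \<lfloor>real j + L\<rfloor>" by (rule le_nat_floor[OF h])
    finally show "m \<in> {..nat \<lfloor>real j + L\<rfloor>}" by simp
  qed
qed simp

lemma ln_ge_one_3: "3 \<le> j \<Longrightarrow> 1 \<le> ln (real j)"
proof -
  assume "3 \<le> j"
  then have "(3::real) \<le> real j" by simp
  then have "exp 1 \<le> real j" using exp_le by linarith
  then have "ln (exp 1) \<le> ln (real j)" by (intro ln_mono) auto
  then show ?thesis by simp
qed



lemma main_sum_bound:
  assumes s: "s \<ge> 2" and \<alpha>: "\<alpha> > 0" and j: "j \<ge> 3"
  shows "(\<Sum>\<omega>\<in>Omega s (Ik \<alpha> j) \<inter> {\<omega>. card \<omega> < s}. \<Prod>n\<in>\<omega>. incl_prob s n)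
     \<le> real s ^ s * (\<alpha> + 1) ^ 2 * real (s - 1) * (real j powr (- 1 / real s) * ln (real j))"
proof -
  define p where "p = incl_prob s"
  define L where "L = \<alpha> * ln (real j)"
  define N where "N = nat \<lfloor>real j + L\<rfloor>"
  define X where "X = {1..N}"
  define e where "e = -1 + 1 / real s"
  define \<Omega>' where "\<Omega>' = {w. w \<subseteq> X \<and> card w \<le> s - 2}"
  define Ms where "Ms = (\<lambda>w. {m\<in>X. real j \<le> real s * real m \<and> m \<notin> w \<and>
      (\<exists>t\<in>{1..s}. \<exists>a'\<in>PiE w (\<lambda>_. {1..s}). real (t * m + (\<Sum>x\<in>w. a' x * x)) \<in> Ik \<alpha> j)})"
  define S where "S = Omega s (Ik \<alpha> j) \<inter> {\<omega>. card \<omega> < s}"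
  define \<pi> where "\<pi> = (\<lambda>w. \<Prod>n\<in>w. p n)"
  have p0: "\<And>n. 0 \<le> p n" unfolding p_def by (rule incl_prob_nonneg)
  have \<pi>0: "\<And>w. 0 \<le> \<pi> w" unfolding \<pi>_def using p0 by (intro prod_nonneg) auto
  have lnj: "1 \<le> ln (real j)" using ln_ge_one_3[OF j] .
  have L0: "0 \<le> L" unfolding L_def using \<alpha> lnj by simp
  have finX: "finite X" unfolding X_def by simp
  have fin\<Omega>': "finite \<Omega>'"
  proof (rule finite_subset)
    show "\<Omega>' \<subseteq> Pow X" unfolding \<Omega>'_def by blast
    show "finite (Pow X)" using finX by simp
  qed
  have finMs: "\<And>w. finite (Ms w)" unfolding Ms_def using finX by (intro finite_subset[OF _ finX]) blast
  have finP: "finite (Sigma \<Omega>' Ms)" using fin\<Omega>' finMs by auto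

  have cover: "S \<subseteq> (\<lambda>(w,m). insert m w) ` Sigma \<Omega>' Ms"
  proof
    fix \<omega> assume "\<omega> \<in> S"
    then have oj: "\<omega> \<in> Omega s (Ik \<alpha> j)" and cs: "card \<omega> < s" unfolding S_def by auto
    obtain a where fin: "finite \<omega>" and pos: "\<forall>x\<in>\<omega>. 1 \<le> x" and apos: "\<forall>x\<in>\<omega>. 1 \<le> a x"
      and asum: "(\<Sum>x\<in>\<omega>. a x) = s" and m0: "real (\<Sum>x\<in>\<omega>. a x * x) \<in> Ik \<alpha> j"
      using Omega_elem[OF oj] by blast
    have ne: "\<omega> \<noteq> {}" using asum s by auto
    define m where "m = Max \<omega>"
    have m\<omega>: "m \<in> \<omega>" using fin ne by (simp add: m_def)
    have xm: "\<forall>x\<in>\<omega>. x \<le> m" using fin by (simp add: m_def)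
    have \<omega>X: "\<omega> \<subseteq> X"
    proof
      fix x assume x: "x \<in> \<omega>"
      have "x \<le> N" unfolding N_def L_def by (rule le_nat_floor, rule Omega_bound(1)[OF oj x])
      then show "x \<in> X" unfolding X_def using pos x by auto
    qed
    have a_le: "\<forall>x\<in>\<omega>. a x \<le> s" using asum fin by (metis member_le_sum zero_le)
    define w where "w = \<omega> - {m}"
    have ins: "insert m w = \<omega>" using m\<omega> by (auto simp: w_def)
    have "card w = card \<omega> - 1" unfolding w_def using m\<omega> fin by simp
    then have w\<Omega>: "w \<in> \<Omega>'" unfolding \<Omega>'_def w_def using \<omega>X cs by auto
    have "(\<Sum>x\<in>\<omega>. a x * x) \<le> (\<Sum>x\<in>\<omega>. a x * m)" using xm by (intro sum_mono) auto
    also have "\<dots> = s * m" using asum by (simp add: sum_distrib_right[symmetric])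
    finally have le1: "(\<Sum>x\<in>\<omega>. a x * x) \<le> s * m" .
    have "real j \<le> real (\<Sum>x\<in>\<omega>. a x * x)" using m0 unfolding Ik_def by (simp only: atLeastAtMost_iff)
    also have "\<dots> \<le> real (s * m)" using le1 by (simp only: of_nat_le_iff)
    finally have jm: "real j \<le> real s * real m" by simp
    have rsum: "(\<Sum>x\<in>w. restrict a w x * x) = (\<Sum>x\<in>w. a x * x)" by (intro sum.cong) auto
    have split: "a m * m + (\<Sum>x\<in>w. a x * x) = (\<Sum>x\<in>\<omega>. a x * x)"
      unfolding w_def using sum.remove[OF fin m\<omega>, of "\<lambda>x. a x * x"] by simp
    have "m \<in> Ms w" unfolding Ms_def
    proof (intro CollectI conjI bexI)
      show "m \<in> X" using \<omega>X m\<omega> by auto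
      show "real j \<le> real s * real m" by (rule jm)
      show "m \<notin> w" unfolding w_def by simp
      show "a m \<in> {1..s}" using apos a_le m\<omega> by auto
      show "restrict a w \<in> PiE w (\<lambda>_. {1..s})" using apos a_le unfolding w_def by auto
      show "real (a m * m + (\<Sum>x\<in>w. restrict a w x * x)) \<in> Ik \<alpha> j" using rsum split m0 by simp
    qed
    then have "(w, m) \<in> Sigma \<Omega>' Ms" using w\<Omega> by auto
    then show "\<omega> \<in> (\<lambda>(w,m). insert m w) ` Sigma \<Omega>' Ms" using ins by force
  qed

  have pm: "p m \<le> real j powr e" if "m \<in> Ms w" for w m
  proof -
    from that have jm: "real j \<le> real s * real m" unfolding Ms_def by auto
    have sp: "real s > 0" using s by simp
    have jp: "real j / real s > 0" using j sp by simp
    have e0: "e \<le> 0" unfolding e_def using s by (simp add: field_simps)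
    have "real m powr e \<le> (real j / real s) powr e"
      using jm sp jp by (intro powr_mono2'[OF e0 jp]) (simp add: field_simps)
    also have "\<dots> = real j powr e / real s powr e" by (simp add: powr_divide)
    finally have h: "real m powr e \<le> real j powr e / real s powr e" .
    have "p m = (1 / real s) * real m powr e" unfolding p_def incl_prob_def e_def
      using jm j by auto
    also have "\<dots> \<le> (1 / real s) * (real j powr e / real s powr e)"
      using h sp by (intro mult_left_mono) auto
    also have "\<dots> = real j powr e / (real s powr 1 * real s powr e)" using sp by simp
    also have "real s powr 1 * real s powr e = real s powr (1 / real s)"
      by (subst powr_add[symmetric]) (simp add: e_def)
    also have "real j powr e / real s powr (1 / real s) \<le> real j powr e"
    proof -
      have "1 \<le> real s powr (1 / real s)" using s by (intro ge_one_powr_ge_zero) auto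
      then have "real j powr e / real s powr (1 / real s) \<le> real j powr e / 1"
        using s by (intro divide_left_mono) auto
      then show ?thesis by simp
    qed
    finally show ?thesis .
  qed

  have cardMs: "card (Ms w) \<le> s ^ s * (nat \<lfloor>L\<rfloor> + 1)" if w: "w \<in> \<Omega>'" for w
  proof -
    let ?B = "\<lambda>t a'. {m::nat. real (t * m + (\<Sum>x\<in>w. a' x * x)) \<in> {real j .. real j + L}}"
    have finw: "finite w" using w finX unfolding \<Omega>'_def by (auto intro: finite_subset)
    have sub: "Ms w \<subseteq> (\<Union>t\<in>{1..s}. \<Union>a'\<in>PiE w (\<lambda>_. {1..s}). ?B t a')"
      unfolding Ms_def Ik_def L_def by blast
    have finB: "finite (?B t a')" if "t \<in> {1..s}" for t a' using that by (intro count_finite) auto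
    have finU: "finite (\<Union>t\<in>{1..s}. \<Union>a'\<in>PiE w (\<lambda>_. {1..s}). ?B t a')"
      using finB finw by (intro finite_UN_I finite_PiE) auto
    have "card (Ms w) \<le> card (\<Union>t\<in>{1..s}. \<Union>a'\<in>PiE w (\<lambda>_. {1..s}). ?B t a')"
      by (rule card_mono[OF finU sub])
    also have "\<dots> \<le> (\<Sum>t\<in>{1..s}. card (\<Union>a'\<in>PiE w (\<lambda>_. {1..s}). ?B t a'))"
      by (rule card_UN_le) simp
    also have "\<dots> \<le> (\<Sum>t\<in>{1..s}. \<Sum>a'\<in>PiE w (\<lambda>_. {1..s}). card (?B t a'))"
      by (intro sum_mono card_UN_le finite_PiE finw) auto
    also have "\<dots> \<le> (\<Sum>t\<in>{1..s}. \<Sum>a'\<in>PiE w (\<lambda>_. {1..s}). nat \<lfloor>L\<rfloor> + 1)"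
      using L0 by (intro sum_mono count_bound) auto
    also have "\<dots> = s * s ^ card w * (nat \<lfloor>L\<rfloor> + 1)"
      using finw by (simp add: card_PiE algebra_simps)
    also have "\<dots> \<le> s ^ s * (nat \<lfloor>L\<rfloor> + 1)"
    proof -
      have "card w \<le> s - 2" using w unfolding \<Omega>'_def by auto
      then have "Suc (card w) \<le> s" using s by auto
      then have "s ^ Suc (card w) \<le> s ^ s" using s by (intro power_increasing) auto
      then show ?thesis by (intro mult_right_mono) auto
    qed
    finally show ?thesis .
  qed
  have Lfl: "real (nat \<lfloor>L\<rfloor>) \<le> L" using L0 by linarith
  define K where "K = real s ^ s * (L + 1) * real j powr e"
  have K0: "0 \<le> K" unfolding K_def using L0 by simp
  have sumMs: "(\<Sum>m\<in>Ms w. p m) \<le> K" if w: "w \<in> \<Omega>'" for w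
  proof -
    have "(\<Sum>m\<in>Ms w. p m) \<le> real (card (Ms w)) * real j powr e"
      using pm by (intro sum_bounded_above) auto
    also have "\<dots> \<le> real (s ^ s * (nat \<lfloor>L\<rfloor> + 1)) * real j powr e"
    proof (intro mult_right_mono)
      show "real (card (Ms w)) \<le> real (s ^ s * (nat \<lfloor>L\<rfloor> + 1))"
        using cardMs[OF w] by (simp only: of_nat_le_iff)
    qed simp
    also have "\<dots> \<le> K" unfolding K_def
    proof (intro mult_right_mono)
      have "real (s ^ s * (nat \<lfloor>L\<rfloor> + 1)) = real s ^ s * (real (nat \<lfloor>L\<rfloor>) + 1)" by (simp add: algebra_simps del: of_nat_nat)
      also have "\<dots> \<le> real s ^ s * (L + 1)" using Lfl by (intro mult_left_mono) auto
      finally show "real (s ^ s * (nat \<lfloor>L\<rfloor> + 1)) \<le> real s ^ s * (L + 1)" .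
    qed simp
    finally show ?thesis .
  qed
  have step5: "(\<Sum>\<omega>\<in>S. \<pi> \<omega>) \<le> (\<Sum>w\<in>\<Omega>'. \<pi> w) * K"
  proof -
    have "(\<Sum>\<omega>\<in>S. \<pi> \<omega>) \<le> (\<Sum>\<omega>\<in>(\<lambda>(w,m). insert m w) ` Sigma \<Omega>' Ms. \<pi> \<omega>)"
      using finP cover \<pi>0 by (intro sum_mono2) auto
    also have "\<dots> \<le> (\<Sum>z\<in>Sigma \<Omega>' Ms. \<pi> ((\<lambda>(w,m). insert m w) z))"
      using sum_image_le[OF finP, of \<pi> "\<lambda>(w,m). insert m w"] \<pi>0 by (simp add: comp_def)
    also have "\<dots> = (\<Sum>(w,m)\<in>Sigma \<Omega>' Ms. \<pi> (insert m w))"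
      by (simp add: case_prod_unfold)
    also have "\<dots> = (\<Sum>w\<in>\<Omega>'. \<Sum>m\<in>Ms w. \<pi> (insert m w))"
      by (rule sum.Sigma[symmetric]) (use fin\<Omega>' finMs in auto)
    also have "\<dots> = (\<Sum>w\<in>\<Omega>'. \<pi> w * (\<Sum>m\<in>Ms w. p m))"
    proof (intro sum.cong refl)
      fix w assume w: "w \<in> \<Omega>'"
      have finw: "finite w" using w finX unfolding \<Omega>'_def by (auto intro: finite_subset)
      show "(\<Sum>m\<in>Ms w. \<pi> (insert m w)) = \<pi> w * (\<Sum>m\<in>Ms w. p m)"
        unfolding sum_distrib_left
      proof (intro sum.cong refl)
        fix m assume "m \<in> Ms w"
        then have "m \<notin> w" unfolding Ms_def by auto
        then show "\<pi> (insert m w) = \<pi> w * p m" unfolding \<pi>_def using finw by (simp add: mult.commute)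
      qed
    qed
    also have "\<dots> \<le> (\<Sum>w\<in>\<Omega>'. \<pi> w * K)"
      using sumMs \<pi>0 by (intro sum_mono mult_left_mono) auto
    also have "\<dots> = (\<Sum>w\<in>\<Omega>'. \<pi> w) * K" by (simp add: sum_distrib_right)
    finally show ?thesis .
  qed

  define Sp where "Sp = (\<Sum>n\<in>X. p n)"
  define U where "U = real N powr (1 / real s)"
  have jL: "real j \<le> real j + L" using L0 by simp
  have N1: "j \<le> N" unfolding N_def by (rule le_nat_floor[OF jL])
  then have N1': "1 \<le> N" using j by simp
  have SpU: "Sp \<le> U" unfolding Sp_def U_def X_def p_def by (rule incl_sum_bound[OF s])
  have Sp0: "0 \<le> Sp" unfolding Sp_def using p0 by (intro sum_nonneg) auto
  have U1: "1 \<le> U" unfolding U_def using N1' by (intro ge_one_powr_ge_zero) auto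
  have step6: "(\<Sum>w\<in>\<Omega>'. \<pi> w) \<le> real (s - 1) * U ^ (s - 2)"
  proof -
    define A where "A = (\<lambda>k. {w. w \<subseteq> X \<and> card w = k})"
    have eq: "\<Omega>' = (\<Union>k\<in>{..s-2}. A k)" unfolding \<Omega>'_def A_def by auto
    have finA: "\<forall>k\<in>{..s-2}. finite (A k)" unfolding A_def using finX
      by (auto intro: finite_subset[of _ "Pow X"])
    have "(\<Sum>w\<in>\<Omega>'. \<pi> w) = (\<Sum>k\<in>{..s-2}. \<Sum>w\<in>A k. \<pi> w)"
      unfolding eq by (rule sum.UNION_disjoint) (use finA in \<open>auto simp: A_def\<close>)
    also have "\<dots> \<le> (\<Sum>k\<in>{..s-2}. Sp ^ k)"
      unfolding A_def \<pi>_def Sp_def using finX p0 by (intro sum_mono set_sum_bound) auto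
    also have "\<dots> \<le> (\<Sum>k\<in>{..s-2}. U ^ (s - 2))"
    proof (intro sum_mono)
      fix k assume "k \<in> {..s-2}"
      then have "k \<le> s - 2" by simp
      have "Sp ^ k \<le> U ^ k" using Sp0 SpU by (intro power_mono) auto
      also have "\<dots> \<le> U ^ (s - 2)" using U1 \<open>k \<le> s - 2\<close> by (intro power_increasing) auto
      finally show "Sp ^ k \<le> U ^ (s - 2)" .
    qed
    also have "\<dots> = real (s - 1) * U ^ (s - 2)" using s by simp
    finally show ?thesis .
  qed
  define c where "c = real (s - 2) / real s"
  have c01: "0 \<le> c" "c \<le> 1" unfolding c_def using s by auto
  have NU: "real N \<le> (1 + \<alpha>) * real j"
  proof -
    have "real N \<le> real j + L" unfolding N_def using L0 by linarith
    moreover have "L \<le> \<alpha> * real j" unfolding L_def using \<alpha> j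
      by (intro mult_left_mono) (auto intro: less_imp_le[OF ln_less_self])
    ultimately show ?thesis by (simp add: algebra_simps)
  qed
  have Upow: "U ^ (s - 2) \<le> (1 + \<alpha>) * real j powr c"
  proof -
    have "U ^ (s - 2) = U powr real (s - 2)" using U1 by (simp add: powr_realpow)
    also have "\<dots> = real N powr c" unfolding U_def c_def by (simp add: powr_powr)
    also have "\<dots> \<le> ((1 + \<alpha>) * real j) powr c" using NU c01 by (intro powr_mono2) auto
    also have "\<dots> = (1 + \<alpha>) powr c * real j powr c" using \<alpha> by (simp add: powr_mult)
    also have "\<dots> \<le> (1 + \<alpha>) powr 1 * real j powr c"
      using c01 \<alpha> by (intro mult_right_mono powr_mono) auto
    also have "\<dots> = (1 + \<alpha>) * real j powr c" using \<alpha> by simp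
    finally show ?thesis .
  qed
  have Kb: "K \<le> real s ^ s * ((\<alpha> + 1) * ln (real j)) * real j powr e"
    unfolding K_def L_def using lnj \<alpha> by (intro mult_right_mono mult_left_mono) (auto simp: algebra_simps)
  have ce: "c + e = - 1 / real s" unfolding c_def e_def using s by (simp add: field_simps of_nat_diff)
  have "(\<Sum>\<omega>\<in>S. \<pi> \<omega>) \<le> (\<Sum>w\<in>\<Omega>'. \<pi> w) * K" by (rule step5)
  also have "\<dots> \<le> (real (s - 1) * ((1 + \<alpha>) * real j powr c)) * (real s ^ s * ((\<alpha> + 1) * ln (real j)) * real j powr e)"
  proof (intro mult_mono)
    show "(\<Sum>w\<in>\<Omega>'. \<pi> w) \<le> real (s - 1) * ((1 + \<alpha>) * real j powr c)"
      using step6 Upow by (smt (verit) mult_left_mono of_nat_0_le_iff)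
  qed (use Kb K0 lnj \<alpha> in \<open>auto intro!: mult_nonneg_nonneg\<close>)
  also have "\<dots> = real s ^ s * (\<alpha> + 1) ^ 2 * real (s - 1) * ((real j powr c * real j powr e) * ln (real j))"
    by (simp add: algebra_simps power2_eq_square)
  also have "real j powr c * real j powr e = real j powr (- 1 / real s)"
    by (simp add: powr_add[symmetric] ce)
  finally show ?thesis unfolding S_def \<pi>_def p_def .
qed



lemma one_minus_ge_exp: "0 \<le> t \<Longrightarrow> t \<le> 1/2 \<Longrightarrow> exp (-2 * t) \<le> 1 - (t::real)"
proof -
  assume t: "0 \<le> t" "t \<le> 1/2"
  have "1 + 2 * t \<le> exp (2 * t)" using exp_ge_add_one_self[of "2*t"] by simp
  then have "exp (-2 * t) \<le> 1 / (1 + 2 * t)" using t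
    by (simp add: exp_minus field_simps)
  also have "\<dots> \<le> 1 - t"
  proof -
    have "t * (2 * t) \<le> t * 1" using t by (intro mult_left_mono) auto
    then have "1 \<le> (1 - t) * (1 + 2 * t)" by (simp add: algebra_simps)
    then show ?thesis using t by (simp add: field_simps)
  qed
  finally show ?thesis .
qed

lemma exp_le_lin: "0 \<le> x \<Longrightarrow> exp x \<le> 1 + x * exp (x::real)"
proof -
  assume x: "0 \<le> x"
  have "1 + (-x) \<le> exp (-x)" by (rule exp_ge_add_one_self)
  then have "(1 - x) * exp x \<le> exp (-x) * exp x" by (intro mult_right_mono) auto
  then have "(1 - x) * exp x \<le> 1" by (simp add: exp_minus)
  then show ?thesis by (simp add: algebra_simps)
qed

lemma pi_le_half:
  assumes s: "s \<ge> 2" and o: "\<omega> \<in> Omega s I"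
  shows "(\<Prod>n\<in>\<omega>. incl_prob s n) \<le> 1/2"
proof -
  obtain a where fin: "finite \<omega>" and asum: "(\<Sum>x\<in>\<omega>. a x) = s" using Omega_elem[OF o] by blast
  have "\<omega> \<noteq> {}" using asum s by auto
  then obtain x where x: "x \<in> \<omega>" by blast
  have "(\<Prod>n\<in>\<omega>. incl_prob s n) = incl_prob s x * (\<Prod>n\<in>\<omega>-{x}. incl_prob s n)"
    using fin x by (simp add: prod.remove)
  also have "\<dots> \<le> incl_prob s x * 1"
    using incl_prob_01[OF s] by (intro mult_left_mono prod_le_1) auto
  also have "\<dots> \<le> 1/2" using incl_prob_le_half[OF s] by simp
  finally show ?thesis .
qed

theorem lemma7:
  fixes s :: nat and \<alpha> :: real
  assumes "s \<ge> 2" and "\<alpha> > 0"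
  shows "\<exists>C. \<forall>i j :: nat. 2 \<le> i \<longrightarrow> i < j \<longrightarrow> Ik \<alpha> i \<inter> Ik \<alpha> j = {} \<longrightarrow>
    (\<Prod>\<omega>\<in>Omega s (Ik \<alpha> i) \<union> Omega s (Ik \<alpha> j). measure (RS s) (Ec s \<omega>))
      \<le> measure (RS s) (Fk s \<alpha> i) * measure (RS s) (Fk s \<alpha> j)
         * (1 + C * real j powr (- 1 / real s) * ln (real j))"
proof -
  have s: "s \<ge> 2" and \<alpha>: "\<alpha> > 0" using assms by auto
  define D where "D = real s ^ s * (\<alpha> + 1) ^ 2 * real (s - 1)"
  have D0: "0 \<le> D" unfolding D_def using \<alpha> by simp
  define C where "C = 2 * D * exp (2 * D * real s)"
  show ?thesis
  proof (intro exI[of _ C] allI impI)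
    fix i j :: nat
    assume i2: "2 \<le> i" and ij: "i < j" and disj: "Ik \<alpha> i \<inter> Ik \<alpha> j = {}"
    have j3: "j \<ge> 3" using i2 ij by simp
    define Wi where "Wi = Omega s (Ik \<alpha> i)"
    define Wj where "Wj = Omega s (Ik \<alpha> j)"
    define \<pi> where "\<pi> = (\<lambda>\<omega>. \<Prod>n\<in>\<omega>. incl_prob s n)"
    define q where "q = (\<lambda>\<omega>. measure (RS s) (Ec s \<omega>))"
    define t where "t = real j powr (- 1 / real s) * ln (real j)"
    have finWi: "finite Wi" and finWj: "finite Wj" unfolding Wi_def Wj_def by (rule Omega_finite)+
    have Wprop: "\<forall>\<omega>\<in>W. finite \<omega> \<and> (\<forall>n\<in>\<omega>. 1 \<le> n)" if "W = Wi \<or> W = Wj" for W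
      using that unfolding Wi_def Wj_def Omega_def by auto
    have qeq: "q \<omega> = 1 - \<pi> \<omega>" if "\<omega> \<in> Wi \<union> Wj" for \<omega>
      unfolding q_def \<pi>_def using that Wprop[of Wi] Wprop[of Wj] by (intro prob_Ec[OF s]) auto
    have \<pi>01: "0 \<le> \<pi> \<omega> \<and> \<pi> \<omega> \<le> 1/2" if "\<omega> \<in> Wi \<union> Wj" for \<omega>
      unfolding \<pi>_def using that pi_le_half[OF s] incl_prob_nonneg unfolding Wi_def Wj_def
      by (auto intro: prod_nonneg)
    have q0: "0 \<le> q \<omega>" for \<omega> unfolding q_def by simp
    have Fi: "(\<Prod>\<omega>\<in>Wi. q \<omega>) \<le> measure (RS s) (Fk s \<alpha> i)"
    proof -
      have "Fk s \<alpha> i = {x. \<forall>\<omega>\<in>Wi. \<not> \<omega> \<subseteq> setA x}" unfolding Wi_def by (rule Fk_eq) (use s in simp)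
      then show ?thesis unfolding q_def using harris_RS[OF s finWi Wprop[of Wi]] by simp
    qed
    have Fj: "(\<Prod>\<omega>\<in>Wj. q \<omega>) \<le> measure (RS s) (Fk s \<alpha> j)"
    proof -
      have "Fk s \<alpha> j = {x. \<forall>\<omega>\<in>Wj. \<not> \<omega> \<subseteq> setA x}" unfolding Wj_def by (rule Fk_eq) (use s in simp)
      then show ?thesis unfolding q_def using harris_RS[OF s finWj Wprop[of Wj]] by simp
    qed
    have ui: "(\<Prod>\<omega>\<in>Wi \<union> Wj. q \<omega>) * (\<Prod>\<omega>\<in>Wi \<inter> Wj. q \<omega>) = (\<Prod>\<omega>\<in>Wi. q \<omega>) * (\<Prod>\<omega>\<in>Wj. q \<omega>)"
      by (rule prod.union_inter[OF finWi finWj])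
    have sumb: "(\<Sum>\<omega>\<in>Wi \<inter> Wj. \<pi> \<omega>) \<le> D * t"
    proof -
      have "Wi \<inter> Wj \<subseteq> Omega s (Ik \<alpha> j) \<inter> {\<omega>. card \<omega> < s}"
        unfolding Wi_def Wj_def using Omega_card_lt disj by auto
      then have "(\<Sum>\<omega>\<in>Wi \<inter> Wj. \<pi> \<omega>) \<le> (\<Sum>\<omega>\<in>Omega s (Ik \<alpha> j) \<inter> {\<omega>. card \<omega> < s}. \<pi> \<omega>)"
        unfolding \<pi>_def using Omega_finite incl_prob_nonneg
        by (intro sum_mono2) (auto intro: prod_nonneg)
      also have "\<dots> \<le> D * t" unfolding \<pi>_def D_def t_def by (rule main_sum_bound[OF s \<alpha> j3])
      finally show ?thesis .
    qed
    have Qlow: "exp (-2 * (D * t)) \<le> (\<Prod>\<omega>\<in>Wi \<inter> Wj. q \<omega>)"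
    proof -
      have "exp (-2 * (D * t)) \<le> exp (-2 * (\<Sum>\<omega>\<in>Wi \<inter> Wj. \<pi> \<omega>))" using sumb by simp
      also have "\<dots> = (\<Prod>\<omega>\<in>Wi \<inter> Wj. exp (-2 * \<pi> \<omega>))"
        using finWi by (simp add: exp_sum sum_distrib_left)
      also have "\<dots> \<le> (\<Prod>\<omega>\<in>Wi \<inter> Wj. q \<omega>)"
      proof (intro prod_mono conjI)
        fix \<omega> assume "\<omega> \<in> Wi \<inter> Wj"
        then have "\<omega> \<in> Wi \<union> Wj" by auto
        then show "0 \<le> exp (-2 * \<pi> \<omega>)" "exp (-2 * \<pi> \<omega>) \<le> q \<omega>"
          using \<pi>01 qeq one_minus_ge_exp by auto
      qed
      finally show ?thesis .
    qed
    have Qpos: "0 < (\<Prod>\<omega>\<in>Wi \<inter> Wj. q \<omega>)" using Qlow by (smt (verit) exp_gt_zero)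
    have t0: "0 \<le> t" unfolding t_def using ln_ge_one_3[OF j3] by simp
    have ts: "t \<le> real s"
    proof -
      have jp: "real j > 0" using j3 by simp
      have "ln (real j) = real s * ln (real j powr (1 / real s))" using jp s by (simp add: ln_powr)
      also have "\<dots> \<le> real s * real j powr (1 / real s)"
        using jp by (intro mult_left_mono less_imp_le[OF ln_less_self]) auto
      finally have "t \<le> real j powr (- 1 / real s) * (real s * real j powr (1 / real s))"
        unfolding t_def by (intro mult_left_mono) auto
      also have "\<dots> = real s * (real j powr (- 1 / real s) * real j powr (1 / real s))" by simp
      also have "real j powr (- 1 / real s) * real j powr (1 / real s) = 1"
        using jp by (simp add: powr_add[symmetric])
      finally show ?thesis by simp
    qed
    have expb: "exp (2 * (D * t)) \<le> 1 + C * t"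
    proof -
      have "exp (2 * (D * t)) \<le> 1 + 2 * (D * t) * exp (2 * (D * t))"
        using D0 t0 by (intro exp_le_lin) auto
      also have "\<dots> \<le> 1 + 2 * (D * t) * exp (2 * D * real s)"
        using D0 t0 ts by (intro add_left_mono mult_left_mono) (auto intro: mult_left_mono)
      also have "\<dots> = 1 + C * t" unfolding C_def by (simp add: algebra_simps)
      finally show ?thesis .
    qed
    define PF where "PF = measure (RS s) (Fk s \<alpha> i) * measure (RS s) (Fk s \<alpha> j)"
    have PF0: "0 \<le> PF" unfolding PF_def by simp
    have "(\<Prod>\<omega>\<in>Wi \<union> Wj. q \<omega>) * (\<Prod>\<omega>\<in>Wi \<inter> Wj. q \<omega>) \<le> PF"
      unfolding ui PF_def using Fi Fj q0 by (intro mult_mono) (auto intro: prod_nonneg)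
    then have "(\<Prod>\<omega>\<in>Wi \<union> Wj. q \<omega>) \<le> PF / (\<Prod>\<omega>\<in>Wi \<inter> Wj. q \<omega>)"
      using Qpos by (simp add: field_simps)
    also have "\<dots> \<le> PF / exp (-2 * (D * t))"
      using Qlow PF0 Qpos by (intro divide_left_mono) auto
    also have "\<dots> = PF * exp (2 * (D * t))" by (simp add: exp_minus field_simps)
    also have "\<dots> \<le> PF * (1 + C * t)" using expb PF0 by (intro mult_left_mono) auto
    finally show "(\<Prod>\<omega>\<in>Omega s (Ik \<alpha> i) \<union> Omega s (Ik \<alpha> j). measure (RS s) (Ec s \<omega>))
      \<le> measure (RS s) (Fk s \<alpha> i) * measure (RS s) (Fk s \<alpha> j)
         * (1 + C * real j powr (- 1 / real s) * ln (real j))"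
      unfolding PF_def q_def Wi_def Wj_def t_def by (simp add: mult.assoc)
  qed
qed

end
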